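(* For any graph $G$, $\mathcal{Z}^{\mathrm{TE}}_-(\check G)=\mathcal{Z}^{\mathrm{TE}}_-(G)$ and $\mathcal{Z}^{\mathrm{TS}}_-(\check G)=\mathcal{Z}^{\mathrm{TS}}_-(G)$, where $\check G$ is the skew-nontrivial subgraph of $G$.
   Context: Skew forcing: vertices are colored blue or white; if any vertex $u$ (blue or white) has exactly one white neighbor $v$, then $u$ may force $v$ to become blue. A skew forcing set is a (possibly empty) set of initially blue vertices from which repeated application of this rule turns every vertex blue; $\mathrm{Z}_-(G)$ is the minimum size of a skew forcing set. The skew-nontrivial subgraph $\check G$ of $G$ is obtained as follows: starting with no blue vertices, apply the skew forcing rule until no more forces are possible; then delete every blue vertex all of whose neighbors are blue, and delete every edge both of whose endpoints are blue. $\mathcal{Z}^{\mathrm{TE}}_-(G)$ has as vertices the minimum skew forcing sets of $G$, with $S_1S_2$ an edge iff $S_1\setminus S_2=\{v_1\}$ and $S_2\setminus S_1=\{v_2\}$ for some vertices $v_1,v_2$; $\mathcal{Z}^{\mathrm{TS}}_-(G)$ has the same vertices with the additional requirement $v_1v_2\in E(G)$. *)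

theory Defs
  imports Main
begin

type_synonym 'a graph = "'a set \<times> 'a set set"

definition verts :: "'a graph \<Rightarrow> 'a set" where "verts G = fst G"
definition edges :: "'a graph \<Rightarrow> 'a set set" where "edges G = snd G"

definition simple_graph :: "'a graph \<Rightarrow> bool" where
  "simple_graph G \<longleftrightarrow> finite (verts G) \<and>
     (\<forall>e\<in>edges G. \<exists>u v. e = {u, v} \<and> u \<noteq> v \<and> u \<in> verts G \<and> v \<in> verts G)"

definition nbrs :: "'a graph \<Rightarrow> 'a \<Rightarrow> 'a set" where
  "nbrs G u = {v. {u, v} \<in> edges G}"

text \<open>Final set of blue vertices obtained from initial blue set S by repeatedly applying
  the skew forcing rule: any vertex u (blue or white) with exactly one white neighbour v
  forces v blue.\<close>
inductive_set skew_closure :: "'a graph \<Rightarrow> 'a set \<Rightarrow> 'a set" for G S where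
  init: "v \<in> S \<Longrightarrow> v \<in> skew_closure G S"
| force: "u \<in> verts G \<Longrightarrow> v \<in> nbrs G u \<Longrightarrow>
           (\<forall>w\<in>nbrs G u. w \<noteq> v \<longrightarrow> w \<in> skew_closure G S) \<Longrightarrow> v \<in> skew_closure G S"

definition skew_forcing_set :: "'a graph \<Rightarrow> 'a set \<Rightarrow> bool" where
  "skew_forcing_set G S \<longleftrightarrow> S \<subseteq> verts G \<and> skew_closure G S = verts G"

definition Z_minus :: "'a graph \<Rightarrow> nat" where
  "Z_minus G = Min {card S | S. skew_forcing_set G S}"

definition min_skew_forcing_sets :: "'a graph \<Rightarrow> 'a set set" where
  "min_skew_forcing_sets G = {S. skew_forcing_set G S \<and> card S = Z_minus G}"

definition skew_nontrivial :: "'a graph \<Rightarrow> 'a graph" where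
  "skew_nontrivial G =
     (let B = skew_closure G {} in
      (verts G - {v \<in> B. nbrs G v \<subseteq> B}, {e \<in> edges G. \<not> e \<subseteq> B}))"

definition ZTE_minus :: "'a graph \<Rightarrow> 'a set graph" where
  "ZTE_minus G = (min_skew_forcing_sets G,
     {{S1, S2} | S1 S2. S1 \<in> min_skew_forcing_sets G \<and> S2 \<in> min_skew_forcing_sets G \<and>
        (\<exists>v1 v2. S1 - S2 = {v1} \<and> S2 - S1 = {v2})})"

definition ZTS_minus :: "'a graph \<Rightarrow> 'a set graph" where
  "ZTS_minus G = (min_skew_forcing_sets G,
     {{S1, S2} | S1 S2. S1 \<in> min_skew_forcing_sets G \<and> S2 \<in> min_skew_forcing_sets G \<and>
        (\<exists>v1 v2. S1 - S2 = {v1} \<and> S2 - S1 = {v2} \<and> {v1, v2} \<in> edges G)})"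

end

theory Submission
  imports Defs
begin

definition wfg :: "'a graph \<Rightarrow> bool" where
  "wfg H \<longleftrightarrow> (\<forall>u v. {u, v} \<in> edges H \<longrightarrow> u \<in> verts H)"

lemma nbrs_sym: "v \<in> nbrs H u \<longleftrightarrow> u \<in> nbrs H v"
  by (simp add: nbrs_def insert_commute)

lemma cl_sub:
  assumes "wfg H" shows "skew_closure H S \<subseteq> S \<union> verts H"
proof
  fix x assume "x \<in> skew_closure H S"
  then show "x \<in> S \<union> verts H"
  proof (induct rule: skew_closure.induct)
    case (init v) then show ?case by simp
  next
    case (force u v)
    then have "{v, u} \<in> edges H" by (simp add: nbrs_def insert_commute)
    then show ?case using assms unfolding wfg_def by blast
  qed
qed

lemma cl_init: "S \<subseteq> skew_closure H S"
  by (auto intro: skew_closure.init)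

lemma cl_mono':
  assumes "S \<subseteq> skew_closure H T" shows "skew_closure H S \<subseteq> skew_closure H T"
proof
  fix x assume "x \<in> skew_closure H S"
  then show "x \<in> skew_closure H T"
  proof (induct rule: skew_closure.induct)
    case (init v) then show ?case using assms by blast
  next
    case (force u v)
    have "\<forall>w\<in>nbrs H u. w \<noteq> v \<longrightarrow> w \<in> skew_closure H T" using force(3) by blast
    then show ?case by (rule skew_closure.force[OF force(1) force(2)])
  qed
qed

lemma cl_mono: assumes "S \<subseteq> T" shows "skew_closure H S \<subseteq> skew_closure H T"
  by (rule cl_mono'[OF subset_trans[OF assms cl_init]])

lemma fin_cards:
  assumes "finite (verts H)"
  shows "finite {card S | S. skew_forcing_set H S}"
proof -
  have "{card S | S. skew_forcing_set H S} \<subseteq> card ` Pow (verts H)"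
    by (auto simp: skew_forcing_set_def)
  then show ?thesis by (rule finite_subset) (simp add: assms)
qed

lemma Z_le:
  assumes "finite (verts H)" "skew_forcing_set H S"
  shows "Z_minus H \<le> card S"
  unfolding Z_minus_def using fin_cards[OF assms(1)] assms(2)
  by (intro Min_le) auto

lemma V_forcing:
  assumes "wfg H" shows "skew_forcing_set H (verts H)"
  using cl_sub[OF assms, of "verts H"] cl_init[of "verts H" H]
  unfolding skew_forcing_set_def by blast

lemma Z_ex:
  assumes "finite (verts H)" "wfg H"
  shows "\<exists>S. skew_forcing_set H S \<and> card S = Z_minus H"
proof -
  have ne: "{card S | S. skew_forcing_set H S} \<noteq> {}"
    using V_forcing[OF assms(2)] by blast
  have "Z_minus H \<in> {card S | S. skew_forcing_set H S}"
    unfolding Z_minus_def using Min_in[OF fin_cards[OF assms(1)] ne] .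
  then show ?thesis by auto
qed

lemma min_avoid:
  assumes fin: "finite (verts H)" and wf: "wfg H"
    and S: "S \<in> min_skew_forcing_sets H"
  shows "S \<inter> skew_closure H {} = {}"
proof (rule ccontr)
  assume "S \<inter> skew_closure H {} \<noteq> {}"
  then obtain x where x: "x \<in> S" "x \<in> skew_closure H {}" by blast
  have sf: "skew_forcing_set H S" and cS: "card S = Z_minus H"
    using S by (auto simp: min_skew_forcing_sets_def)
  define S' where "S' = S - {x}"
  have "x \<in> skew_closure H S'" using x(2) cl_mono[of "{}" S' H] by blast
  then have "S \<subseteq> skew_closure H S'" using cl_init[of S' H] unfolding S'_def by blast
  then have "skew_closure H S \<subseteq> skew_closure H S'" by (rule cl_mono')
  moreover have "skew_closure H S' \<subseteq> verts H"
    using cl_sub[OF wf, of S'] sf unfolding skew_forcing_set_def S'_def by blast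
  ultimately have "skew_forcing_set H S'"
    using sf unfolding skew_forcing_set_def S'_def by blast
  then have "Z_minus H \<le> card S'" by (rule Z_le[OF fin])
  moreover have "S \<subseteq> verts H" using sf unfolding skew_forcing_set_def by blast
  then have "finite S" using fin by (rule finite_subset)
  then have "card S' < card S" unfolding S'_def using x(1)
    by (rule card_Diff1_less)
  ultimately show False using cS by simp
qed

text \<open>Chronologies of forces.\<close>

inductive reach :: "'a graph \<Rightarrow> ('a \<times> 'a) set \<Rightarrow> bool" for G where
  r0: "reach G {}"
| rs: "reach G P \<Longrightarrow> u \<in> verts G \<Longrightarrow> v \<in> nbrs G u \<Longrightarrow> v \<notin> snd ` P \<Longrightarrow>
       nbrs G u - {v} \<subseteq> snd ` P \<Longrightarrow> reach G (insert (u, v) P)"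

lemma reach_cl: "reach G P \<Longrightarrow> snd ` P \<subseteq> skew_closure G {}"
proof (induct rule: reach.induct)
  case r0 then show ?case by simp
next
  case (rs P u v)
  have "\<forall>w\<in>nbrs G u. w \<noteq> v \<longrightarrow> w \<in> skew_closure G {}"
    using rs(2) rs(6) by blast
  then have "v \<in> skew_closure G {}" by (rule skew_closure.force[OF rs(3) rs(4)])
  then show ?case using rs(2) by simp
qed

lemma reach_fin: "reach G P \<Longrightarrow> finite P"
  by (induct rule: reach.induct) simp_all

lemma reach_nb: "reach G P \<Longrightarrow> (u, v) \<in> P \<Longrightarrow> nbrs G u \<subseteq> snd ` P \<and> u \<in> verts G \<and> v \<in> nbrs G u"
proof (induct arbitrary: u v rule: reach.induct)
  case r0 then show ?case by simp
next
  case (rs P u' v')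
  have sub: "snd ` P \<subseteq> snd ` insert (u', v') P" by blast
  from rs(7) consider "(u, v) = (u', v')" | "(u, v) \<in> P" by blast
  then show ?case
  proof cases
    case 1
    then have "u = u'" "v = v'" by simp_all
    moreover have "nbrs G u' \<subseteq> snd ` insert (u', v') P" using rs(6) by auto
    ultimately show ?thesis using rs(3) rs(4) by simp
  next
    case 2
    then have "nbrs G u \<subseteq> snd ` P \<and> u \<in> verts G \<and> v \<in> nbrs G u" by (rule rs(2))
    then show ?thesis using sub by blast
  qed
qed

lemma reach_inj: "reach G P \<Longrightarrow> inj_on fst P \<and> inj_on snd P"
proof (induct rule: reach.induct)
  case r0 then show ?case by simp
next
  case (rs P u v)
  have nu: "u \<notin> fst ` P"
  proof
    assume "u \<in> fst ` P"
    then obtain p where "p \<in> P" "u = fst p" by blast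
    then obtain v' where "(u, v') \<in> P" by (cases p) auto
    then have "nbrs G u \<subseteq> snd ` P" using reach_nb[OF rs(1)] by blast
    then show False using rs(4) rs(5) by blast
  qed
  have nP: "(u, v) \<notin> P" using rs(5) by force
  have "inj_on fst (insert (u, v) P)"
    using rs(2) nu nP by (simp add: inj_on_insert)
  moreover have "inj_on snd (insert (u, v) P)"
    using rs(2) rs(5) nP by (simp add: inj_on_insert)
  ultimately show ?case ..
qed

lemma reach_max:
  assumes wf: "wfg G" and fin: "finite (verts G)"
  shows "\<exists>P. reach G P \<and> snd ` P = skew_closure G {}"
proof -
  have finB: "finite (skew_closure G {})"
  proof (rule finite_subset[OF _ fin])
    show "skew_closure G {} \<subseteq> verts G" using cl_sub[OF wf, of "{}"] by simp
  qed
  have "\<exists>P. reach G P \<and> (\<forall>Q. reach G Q \<longrightarrow> card (snd ` Q) \<le> card (snd ` P))"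
  proof (rule ex_has_greatest_nat[where P = "reach G" and f = "\<lambda>Q. card (snd ` Q)" and b = "card (skew_closure G {}) + 1"])
    show "reach G {}" by (rule reach.r0)
    show "\<forall>y. reach G y \<longrightarrow> card (snd ` y) < card (skew_closure G {}) + 1"
    proof (intro allI impI)
      fix y assume "reach G y"
      then have "snd ` y \<subseteq> skew_closure G {}" by (rule reach_cl)
      then have "card (snd ` y) \<le> card (skew_closure G {})"
        by (rule card_mono[OF finB])
      then show "card (snd ` y) < card (skew_closure G {}) + 1" by simp
    qed
  qed
  then obtain P where P: "reach G P" and mx: "\<And>Q. reach G Q \<Longrightarrow> card (snd ` Q) \<le> card (snd ` P)"
    by blast
  have "skew_closure G {} \<subseteq> snd ` P"
  proof
    fix x assume "x \<in> skew_closure G {}"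
    then show "x \<in> snd ` P"
    proof (induct rule: skew_closure.induct)
      case (init v) then show ?case by simp
    next
      case (force u v)
      show ?case
      proof (rule ccontr)
        assume nv: "v \<notin> snd ` P"
        have "nbrs G u - {v} \<subseteq> snd ` P" using force(3) by blast
        then have r: "reach G (insert (u, v) P)"
          by (rule reach.rs[OF P force(1) force(2) nv])
        have fP: "finite (snd ` P)" using reach_fin[OF P] by (rule finite_imageI)
        have "snd ` insert (u, v) P = insert v (snd ` P)" by simp
        then have "card (snd ` insert (u, v) P) = card (snd ` P) + 1"
          using card_insert_disjoint[OF fP nv] by simp
        then show False using mx[OF r] by simp
      qed
    qed
  qed
  then have "snd ` P = skew_closure G {}" using reach_cl[OF P] by (rule equalityI[rotated])
  then show ?thesis using P by blast
qed

lemma sn_verts: "verts (skew_nontrivial G) =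
   verts G - {v \<in> skew_closure G {}. nbrs G v \<subseteq> skew_closure G {}}"
  by (simp add: skew_nontrivial_def verts_def Let_def)

lemma sn_edges: "edges (skew_nontrivial G) =
   {e \<in> edges G. \<not> e \<subseteq> skew_closure G {}}"
  by (simp add: skew_nontrivial_def edges_def Let_def)

lemma sn_nbrs: "nbrs (skew_nontrivial G) u =
   {v. {u, v} \<in> edges G \<and> \<not> {u, v} \<subseteq> skew_closure G {}}"
  by (simp add: nbrs_def sn_edges)

lemma simple_wfg: "simple_graph G \<Longrightarrow> wfg G"
  unfolding simple_graph_def wfg_def
  by (metis doubleton_eq_iff)

lemma sn_wfg: "simple_graph G \<Longrightarrow> wfg (skew_nontrivial G)"
  unfolding wfg_def sn_verts sn_edges
proof (intro allI impI)
  fix u v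
  assume sg: "simple_graph G" and e: "{u, v} \<in> {e \<in> edges G. \<not> e \<subseteq> skew_closure G {}}"
  have "u \<in> verts G" using simple_wfg[OF sg] e unfolding wfg_def by blast
  moreover have "v \<in> nbrs G u" using e by (simp add: nbrs_def)
  ultimately show "u \<in> verts G - {v \<in> skew_closure G {}. nbrs G v \<subseteq> skew_closure G {}}"
    using e by auto
qed

lemma sn_fin: "simple_graph G \<Longrightarrow> finite (verts (skew_nontrivial G))"
  unfolding sn_verts simple_graph_def by simp

lemma D_sub:
  assumes sg: "simple_graph G"
  assumes v: "v \<in> skew_closure G {}" "\<not> nbrs G v \<subseteq> skew_closure G {}"
  shows "v \<in> skew_closure (skew_nontrivial G) {}"
proof -
  let ?B = "skew_closure G {}"
  let ?R = "{v \<in> ?B. nbrs G v \<subseteq> ?B}"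
  let ?G' = "skew_nontrivial G"
  have wf: "wfg G" using simple_wfg[OF sg] .
  have fin: "finite (verts G)" using sg by (simp add: simple_graph_def)
  have finB: "finite ?B"
  proof (rule finite_subset[OF _ fin])
    show "skew_closure G {} \<subseteq> verts G" using cl_sub[OF wf, of "{}"] by simp
  qed
  obtain P where P: "reach G P" and sP: "snd ` P = ?B" using reach_max[OF wf fin] by blast
  have inj: "inj_on fst P" "inj_on snd P" using reach_inj[OF P] by auto
  have nbP: "\<And>u w. (u, w) \<in> P \<Longrightarrow> nbrs G u \<subseteq> ?B \<and> u \<in> verts G \<and> w \<in> nbrs G u"
    using reach_nb[OF P] sP by blast
  define PR where "PR = {p \<in> P. snd p \<in> ?R}"
  have PRsub: "PR \<subseteq> P" unfolding PR_def by blast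
  have "snd ` PR = ?R"
  proof
    show "snd ` PR \<subseteq> ?R" unfolding PR_def by blast
    show "?R \<subseteq> snd ` PR"
    proof
      fix x assume x: "x \<in> ?R"
      then have "x \<in> snd ` P" using sP by blast
      then obtain p where "p \<in> P" "x = snd p" by blast
      then show "x \<in> snd ` PR" unfolding PR_def using x by blast
    qed
  qed
  moreover have "card (snd ` PR) = card PR" using card_image[OF inj_on_subset[OF inj(2) PRsub]] .
  ultimately have cPR: "card PR = card ?R" by simp
  have fR: "fst ` PR \<subseteq> ?R"
  proof
    fix u assume "u \<in> fst ` PR"
    then obtain w where uw: "(u, w) \<in> P" "w \<in> ?R" unfolding PR_def by force
    have "w \<in> nbrs G u" using nbP[OF uw(1)] by blast
    then have "u \<in> nbrs G w" by (simp add: nbrs_sym)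
    then have "u \<in> ?B" using uw by blast
    then show "u \<in> ?R" using nbP[OF uw(1)] by blast
  qed
  have "card (fst ` PR) = card PR" using card_image[OF inj_on_subset[OF inj(1) PRsub]] .
  moreover have finR: "finite ?R" using finB by (rule finite_subset[rotated]) blast
  ultimately have fPR: "fst ` PR = ?R"
    using card_subset_eq[OF finR fR] cPR by simp
  have notB: "u \<notin> ?B" if uw: "(u, w) \<in> P" "w \<in> ?B" "\<not> nbrs G w \<subseteq> ?B" for u w
  proof
    assume "u \<in> ?B"
    then have "u \<in> ?R" using nbP[OF uw(1)] by blast
    then have "u \<in> fst ` PR" using fPR by simp
    then obtain pp where "pp \<in> PR" "u = fst pp" by blast
    then obtain w' where "(u, w') \<in> PR" by (cases pp) auto
    then have uw': "(u, w') \<in> P" "w' \<in> ?R" unfolding PR_def by auto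
    have "(u, w) = (u, w')" using inj_onD[OF inj(1) _ uw(1) uw'(1)] by simp
    then have "w = w'" by simp
    then show False using uw \<open>w' \<in> ?R\<close> by blast
  qed
  have main: "reach G Q \<Longrightarrow> Q \<subseteq> P \<Longrightarrow> (\<forall>p \<in> Q. snd p \<in> ?B \<and> \<not> nbrs G (snd p) \<subseteq> ?B
       \<longrightarrow> snd p \<in> skew_closure ?G' {})" for Q
  proof (induct rule: reach.induct)
    case r0 then show ?case by simp
  next
    case (rs Q u w)
    have IH: "\<forall>p \<in> Q. snd p \<in> ?B \<and> \<not> nbrs G (snd p) \<subseteq> ?B \<longrightarrow> snd p \<in> skew_closure ?G' {}"
      using rs(2,7) by blast
    have uwP: "(u, w) \<in> P" using rs(7) by blast
    have new: "w \<in> skew_closure ?G' {}" if wD: "w \<in> ?B" "\<not> nbrs G w \<subseteq> ?B"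
    proof (rule skew_closure.force[of u])
      have uB: "u \<notin> ?B" using notB[OF uwP wD] .
      show "u \<in> verts ?G'" unfolding sn_verts using uB nbP[OF uwP] by blast
      show "w \<in> nbrs ?G' u" unfolding sn_nbrs using uB rs(4) by (simp add: nbrs_def)
      show "\<forall>x\<in>nbrs ?G' u. x \<noteq> w \<longrightarrow> x \<in> skew_closure ?G' {}"
      proof (intro ballI impI)
        fix x assume x: "x \<in> nbrs ?G' u" "x \<noteq> w"
        then have xn: "x \<in> nbrs G u" unfolding sn_nbrs by (simp add: nbrs_def)
        then have "x \<in> snd ` Q" using rs(6) x(2) by blast
        then obtain p where y: "p \<in> Q" "x = snd p" by blast
        have "x \<in> ?B" using xn nbP[OF uwP] by blast
        moreover have "u \<in> nbrs G x" using xn by (simp add: nbrs_sym)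
        then have "\<not> nbrs G x \<subseteq> ?B" using uB by blast
        ultimately show "x \<in> skew_closure ?G' {}" using IH y by blast
      qed
    qed
    show ?case
    proof
      fix p assume "p \<in> insert (u, w) Q"
      then consider "p = (u, w)" | "p \<in> Q" by blast
      then show "snd p \<in> ?B \<and> \<not> nbrs G (snd p) \<subseteq> ?B \<longrightarrow> snd p \<in> skew_closure ?G' {}"
      proof cases
        case 1 then show ?thesis using new by simp
      next
        case 2 then show ?thesis using IH by blast
      qed
    qed
  qed
  have "v \<in> snd ` P" using v sP by blast
  then obtain p where p: "p \<in> P" "v = snd p" by blast
  have "\<forall>p \<in> P. snd p \<in> ?B \<and> \<not> nbrs G (snd p) \<subseteq> ?B \<longrightarrow> snd p \<in> skew_closure ?G' {}"
    using main[OF P subset_refl] .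
  then show ?thesis using p v by simp
qed

lemma clG'_sub:
  assumes sg: "simple_graph G"
  shows "skew_closure (skew_nontrivial G) S \<subseteq> skew_closure G S"
proof
  fix x assume "x \<in> skew_closure (skew_nontrivial G) S"
  then show "x \<in> skew_closure G S"
  proof (induct rule: skew_closure.induct)
    case (init v) then show ?case by (rule skew_closure.init)
  next
    case (force u v)
    have u: "u \<in> verts G" using force(1) unfolding sn_verts by blast
    have v: "v \<in> nbrs G u" using force(2) unfolding sn_nbrs by (simp add: nbrs_def)
    have BS: "skew_closure G {} \<subseteq> skew_closure G S" by (rule cl_mono) simp
    have "\<forall>w\<in>nbrs G u. w \<noteq> v \<longrightarrow> w \<in> skew_closure G S"
    proof (intro ballI impI)
      fix w assume w: "w \<in> nbrs G u" "w \<noteq> v"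
      show "w \<in> skew_closure G S"
      proof (cases "{u, w} \<subseteq> skew_closure G {}")
        case True then show ?thesis using BS by blast
      next
        case False
        then have "w \<in> nbrs (skew_nontrivial G) u" using w(1) unfolding sn_nbrs by (simp add: nbrs_def)
        then show ?thesis using force(3) w(2) by blast
      qed
    qed
    then show ?case by (rule skew_closure.force[OF u v])
  qed
qed

lemma clG_sub:
  assumes sg: "simple_graph G"
  shows "skew_closure G S \<subseteq> skew_closure (skew_nontrivial G) S \<union> skew_closure G {}"
proof
  fix x assume "x \<in> skew_closure G S"
  then show "x \<in> skew_closure (skew_nontrivial G) S \<union> skew_closure G {}"
  proof (induct rule: skew_closure.induct)
    case (init v) then show ?case by (simp add: skew_closure.init)
  next
    case (force u v)
    show ?case
    proof (cases "v \<in> skew_closure G {}")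
      case True then show ?thesis by simp
    next
      case vB: False
      have u: "u \<in> verts (skew_nontrivial G)" unfolding sn_verts using force(1) force(2) vB by blast
      have v: "v \<in> nbrs (skew_nontrivial G) u" unfolding sn_nbrs using force(2) vB by (simp add: nbrs_def)
      have "\<forall>w\<in>nbrs (skew_nontrivial G) u. w \<noteq> v \<longrightarrow> w \<in> skew_closure (skew_nontrivial G) S"
      proof (intro ballI impI)
        fix w assume w: "w \<in> nbrs (skew_nontrivial G) u" "w \<noteq> v"
        have wn: "w \<in> nbrs G u" and nsub: "\<not> {u, w} \<subseteq> skew_closure G {}"
          using w(1) unfolding sn_nbrs by (simp_all add: nbrs_def)
        then have "w \<in> skew_closure (skew_nontrivial G) S \<union> skew_closure G {}"
          using force(3) w(2) by blast
        then show "w \<in> skew_closure (skew_nontrivial G) S"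
        proof
          assume wB: "w \<in> skew_closure G {}"
          then have uB: "u \<notin> skew_closure G {}" using nsub by blast
          have "u \<in> nbrs G w" using wn by (simp add: nbrs_sym)
          then have "\<not> nbrs G w \<subseteq> skew_closure G {}" using uB by blast
          then have "w \<in> skew_closure (skew_nontrivial G) {}" by (rule D_sub[OF sg wB])
          moreover have "skew_closure (skew_nontrivial G) {} \<subseteq> skew_closure (skew_nontrivial G) S"
            by (rule cl_mono) simp
          ultimately show ?thesis by blast
        qed
      qed
      then have "v \<in> skew_closure (skew_nontrivial G) S" by (rule skew_closure.force[OF u v])
      then show ?thesis by simp
    qed
  qed
qed

lemma forcing_iff:
  assumes sg: "simple_graph G" and S: "S \<subseteq> verts G" "S \<inter> skew_closure G {} = {}"
  shows "skew_forcing_set G S \<longleftrightarrow> skew_forcing_set (skew_nontrivial G) S"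
proof -
  let ?B = "skew_closure G {}"
  let ?G' = "skew_nontrivial G"
  have wf: "wfg G" by (rule simple_wfg[OF sg])
  have wf': "wfg ?G'" by (rule sn_wfg[OF sg])
  have S': "S \<subseteq> verts ?G'" using S unfolding sn_verts by blast
  have BS: "?B \<subseteq> skew_closure G S" by (rule cl_mono) simp
  have c1: "skew_closure ?G' S \<subseteq> skew_closure G S" by (rule clG'_sub[OF sg])
  have c2: "skew_closure G S \<subseteq> skew_closure ?G' S \<union> ?B" by (rule clG_sub[OF sg])
  have s1: "skew_closure G S \<subseteq> verts G" using cl_sub[OF wf, of S] S(1) by blast
  have s2: "skew_closure ?G' S \<subseteq> verts ?G'" using cl_sub[OF wf', of S] S' by blast
  have D: "x \<in> skew_closure ?G' S" if "x \<in> ?B" "x \<in> verts ?G'" for x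
  proof -
    have "\<not> nbrs G x \<subseteq> ?B" using that unfolding sn_verts by blast
    then have "x \<in> skew_closure ?G' {}" by (rule D_sub[OF sg that(1)])
    moreover have "skew_closure ?G' {} \<subseteq> skew_closure ?G' S" by (rule cl_mono) simp
    ultimately show ?thesis by blast
  qed
  have vsub: "verts ?G' \<subseteq> verts G" unfolding sn_verts by blast
  have BV: "?B \<subseteq> verts G" using cl_sub[OF wf, of "{}"] by simp
  show ?thesis
  proof
    assume "skew_forcing_set G S"
    then have e: "skew_closure G S = verts G" unfolding skew_forcing_set_def by blast
    have "verts ?G' \<subseteq> skew_closure ?G' S"
    proof
      fix x assume x: "x \<in> verts ?G'"
      then have "x \<in> skew_closure ?G' S \<union> ?B" using c2 e vsub by blast
      then show "x \<in> skew_closure ?G' S" using D x by blast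
    qed
    then show "skew_forcing_set ?G' S" unfolding skew_forcing_set_def using S' s2 by blast
  next
    assume "skew_forcing_set ?G' S"
    then have e: "skew_closure ?G' S = verts ?G'" unfolding skew_forcing_set_def by blast
    have "verts G \<subseteq> skew_closure G S"
    proof
      fix x assume x: "x \<in> verts G"
      show "x \<in> skew_closure G S"
      proof (cases "x \<in> ?B")
        case True then show ?thesis using BS by blast
      next
        case False
        then have "x \<in> verts ?G'" using x unfolding sn_verts by blast
        then show ?thesis using e c1 by blast
      qed
    qed
    then show "skew_forcing_set G S" unfolding skew_forcing_set_def using S(1) s1 by blast
  qed
qed

lemma mins_avoid_B:
  assumes sg: "simple_graph G" and S: "S \<in> min_skew_forcing_sets G"
  shows "S \<inter> skew_closure G {} = {} \<and> S \<subseteq> verts G"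
proof -
  have "S \<inter> skew_closure G {} = {}"
    using min_avoid[OF _ simple_wfg[OF sg] S] sg by (simp add: simple_graph_def)
  moreover have "S \<subseteq> verts G" using S unfolding min_skew_forcing_sets_def skew_forcing_set_def by blast
  ultimately show ?thesis by blast
qed

lemma mins'_avoid_B:
  assumes sg: "simple_graph G" and S: "S \<in> min_skew_forcing_sets (skew_nontrivial G)"
  shows "S \<inter> skew_closure G {} = {} \<and> S \<subseteq> verts G"
proof -
  let ?G' = "skew_nontrivial G"
  have a: "S \<inter> skew_closure ?G' {} = {}"
    by (rule min_avoid[OF sn_fin[OF sg] sn_wfg[OF sg] S])
  have b: "S \<subseteq> verts ?G'" using S unfolding min_skew_forcing_sets_def skew_forcing_set_def by blast
  have "S \<inter> skew_closure G {} = {}"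
  proof (rule ccontr)
    assume "S \<inter> skew_closure G {} \<noteq> {}"
    then obtain x where x: "x \<in> S" "x \<in> skew_closure G {}" by blast
    then have "x \<in> verts ?G'" using b by blast
    then have "\<not> nbrs G x \<subseteq> skew_closure G {}" using x(2) unfolding sn_verts by blast
    then have "x \<in> skew_closure ?G' {}" by (rule D_sub[OF sg x(2)])
    then show False using a x(1) by blast
  qed
  moreover have "S \<subseteq> verts G" using b unfolding sn_verts by blast
  ultimately show ?thesis by blast
qed

lemma Z_eq:
  assumes sg: "simple_graph G"
  shows "Z_minus (skew_nontrivial G) = Z_minus G"
proof -
  let ?G' = "skew_nontrivial G"
  have fin: "finite (verts G)" using sg by (simp add: simple_graph_def)
  obtain S0 where S0: "skew_forcing_set G S0" "card S0 = Z_minus G"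
    using Z_ex[OF fin simple_wfg[OF sg]] by blast
  then have "S0 \<in> min_skew_forcing_sets G" unfolding min_skew_forcing_sets_def by blast
  then have "S0 \<inter> skew_closure G {} = {} \<and> S0 \<subseteq> verts G" by (rule mins_avoid_B[OF sg])
  then have "skew_forcing_set ?G' S0" using forcing_iff[OF sg] S0(1) by blast
  then have le1: "Z_minus ?G' \<le> Z_minus G" using Z_le[OF sn_fin[OF sg]] S0(2) by metis
  obtain S1 where S1: "skew_forcing_set ?G' S1" "card S1 = Z_minus ?G'"
    using Z_ex[OF sn_fin[OF sg] sn_wfg[OF sg]] by blast
  then have "S1 \<in> min_skew_forcing_sets ?G'" unfolding min_skew_forcing_sets_def by blast
  then have "S1 \<inter> skew_closure G {} = {} \<and> S1 \<subseteq> verts G" by (rule mins'_avoid_B[OF sg])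
  then have "skew_forcing_set G S1" using forcing_iff[OF sg] S1(1) by blast
  then have le2: "Z_minus G \<le> Z_minus ?G'" using Z_le[OF fin] S1(2) by metis
  show ?thesis using le1 le2 by simp
qed

lemma mins_eq:
  assumes sg: "simple_graph G"
  shows "min_skew_forcing_sets (skew_nontrivial G) = min_skew_forcing_sets G"
proof
  show "min_skew_forcing_sets (skew_nontrivial G) \<subseteq> min_skew_forcing_sets G"
  proof
    fix S assume S: "S \<in> min_skew_forcing_sets (skew_nontrivial G)"
    have a: "S \<inter> skew_closure G {} = {} \<and> S \<subseteq> verts G" by (rule mins'_avoid_B[OF sg S])
    have "skew_forcing_set (skew_nontrivial G) S" "card S = Z_minus (skew_nontrivial G)"
      using S unfolding min_skew_forcing_sets_def by blast+
    then show "S \<in> min_skew_forcing_sets G"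
      using forcing_iff[OF sg] a Z_eq[OF sg] unfolding min_skew_forcing_sets_def by auto
  qed
next
  show "min_skew_forcing_sets G \<subseteq> min_skew_forcing_sets (skew_nontrivial G)"
  proof
    fix S assume S: "S \<in> min_skew_forcing_sets G"
    have a: "S \<inter> skew_closure G {} = {} \<and> S \<subseteq> verts G" by (rule mins_avoid_B[OF sg S])
    have "skew_forcing_set G S" "card S = Z_minus G"
      using S unfolding min_skew_forcing_sets_def by blast+
    then show "S \<in> min_skew_forcing_sets (skew_nontrivial G)"
      using forcing_iff[OF sg] a Z_eq[OF sg] unfolding min_skew_forcing_sets_def by auto
  qed
qed

lemma edge_iff:
  assumes sg: "simple_graph G" and S1: "S1 \<in> min_skew_forcing_sets G" and d: "S1 - S2 = {v1}"
  shows "{v1, v2} \<in> edges (skew_nontrivial G) \<longleftrightarrow> {v1, v2} \<in> edges G"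
proof -
  have "v1 \<in> S1" using d by blast
  then have "v1 \<notin> skew_closure G {}" using mins_avoid_B[OF sg S1] by blast
  then show ?thesis unfolding sn_edges by blast
qed

theorem theorem5p20:
  fixes G :: "'a graph"
  assumes "simple_graph G"
  shows "ZTE_minus (skew_nontrivial G) = ZTE_minus G \<and>
         ZTS_minus (skew_nontrivial G) = ZTS_minus G"
proof
  show "ZTE_minus (skew_nontrivial G) = ZTE_minus G"
    unfolding ZTE_minus_def mins_eq[OF assms] ..
  have "{{S1, S2} | S1 S2. S1 \<in> min_skew_forcing_sets G \<and> S2 \<in> min_skew_forcing_sets G \<and>
        (\<exists>v1 v2. S1 - S2 = {v1} \<and> S2 - S1 = {v2} \<and> {v1, v2} \<in> edges (skew_nontrivial G))}
      = {{S1, S2} | S1 S2. S1 \<in> min_skew_forcing_sets G \<and> S2 \<in> min_skew_forcing_sets G \<and>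
        (\<exists>v1 v2. S1 - S2 = {v1} \<and> S2 - S1 = {v2} \<and> {v1, v2} \<in> edges G)}"
    (is "?L = ?R")
  proof
    show "?L \<subseteq> ?R"
    proof
      fix x assume "x \<in> ?L"
      then obtain S1 S2 v1 v2 where h: "x = {S1, S2}" "S1 \<in> min_skew_forcing_sets G"
        "S2 \<in> min_skew_forcing_sets G" "S1 - S2 = {v1}" "S2 - S1 = {v2}"
        "{v1, v2} \<in> edges (skew_nontrivial G)" by blast
      then have "{v1, v2} \<in> edges G" using edge_iff[OF assms h(2) h(4)] by blast
      then show "x \<in> ?R" using h by blast
    qed
  next
    show "?R \<subseteq> ?L"
    proof
      fix x assume "x \<in> ?R"
      then obtain S1 S2 v1 v2 where h: "x = {S1, S2}" "S1 \<in> min_skew_forcing_sets G"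
        "S2 \<in> min_skew_forcing_sets G" "S1 - S2 = {v1}" "S2 - S1 = {v2}"
        "{v1, v2} \<in> edges G" by blast
      then have "{v1, v2} \<in> edges (skew_nontrivial G)" using edge_iff[OF assms h(2) h(4)] by blast
      then show "x \<in> ?L" using h by blast
    qed
  qed
  then show "ZTS_minus (skew_nontrivial G) = ZTS_minus G"
    unfolding ZTS_minus_def mins_eq[OF assms] by simp
qed

end
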